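(* Let $\mathcal{A}\subseteq\mathcal{B}$ be sub-$\sigma$-algebras of a complete probability space $(\Omega,\mathcal{F},P)$. Let $x:L_\infty(\mathcal{B})\to L_\infty(\mathcal{A})$ be an $\mathcal{A}$-homogeneous monotone linear operator that is continuous from above, and assume there is a constant $c>0$ with $x(1)\ge c$. Then there is a probability measure $Q\ll P$ on $(\Omega,\mathcal{B})$, with $f:=\frac{dQ}{dP}\in L^+_1(\mathcal{B})$, such that \[x(X)=x(1)E_Q[X\mid\mathcal{A}]=x(1)E\Big[X\frac{f}{E[f\mid\mathcal{A}]}\,\Big|\,\mathcal{A}\Big],\qquad X\in L_\infty(\mathcal{B}).\] Moreover, there is a unique $f=\frac{dQ}{dP}$ in $L^+_1(\mathcal{B})$ such that $E[f\mid\mathcal{A}]=1$ and $x(X)=x(1)E[fX\mid\mathcal{A}]$.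
   Context: All (in)equalities hold $P$-a.s. $\mathcal{A}$-homogeneous: $x(\lambda X)=\lambda x(X)$ for all $\lambda\in L^+_\infty(\mathcal{A})$, $X\in L_\infty(\mathcal{B})$. Monotone: $X\ge X'\Rightarrow x(X)\ge x(X')$. Continuous from above: for every nonincreasing sequence $X_n$ with $P$-a.s. limit $X$, $x(X_n)\downarrow x(X)$ $P$-a.s. *)

theory Defs
  imports "HOL-Probability.Probability"
begin

definition complete_ms :: "'a measure \<Rightarrow> bool" where
  "complete_ms M \<longleftrightarrow> (\<forall>N \<in> null_sets M. \<forall>S. S \<subseteq> N \<longrightarrow> S \<in> sets M)"

text \<open>Elements of L_infinity are
  identified up to M-a.e. equality; all (in)equalities below are stated M-a.e.\<close>
definition Linf :: "'a measure \<Rightarrow> 'a measure \<Rightarrow> ('a \<Rightarrow> real) set" where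
  "Linf M B = {X. X \<in> borel_measurable B \<and> (\<exists>C. AE \<omega> in M. \<bar>X \<omega>\<bar> \<le> C)}"

end

theory Submission
  imports Defs
begin

locale ctx =
  fixes M A B :: "'a measure"
    and x :: "('a \<Rightarrow> real) \<Rightarrow> ('a \<Rightarrow> real)"
    and c :: real
  assumes prob: "prob_space M"
    and subB: "subalgebra M B"
    and subA: "subalgebra B A"
    and maps: "\<And>X. X \<in> Linf M B \<Longrightarrow> x X \<in> Linf M A"
    and additive: "\<And>X Y. X \<in> Linf M B \<Longrightarrow> Y \<in> Linf M B \<Longrightarrow>
        AE \<omega> in M. x (\<lambda>\<eta>. X \<eta> + Y \<eta>) \<omega> = x X \<omega> + x Y \<omega>"
    and scalar: "\<And>X (a::real). X \<in> Linf M B \<Longrightarrow>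
        AE \<omega> in M. x (\<lambda>\<eta>. a * X \<eta>) \<omega> = a * x X \<omega>"
    and A_homog: "\<And>l X. l \<in> Linf M A \<Longrightarrow> (AE \<omega> in M. 0 \<le> l \<omega>) \<Longrightarrow> X \<in> Linf M B \<Longrightarrow>
        AE \<omega> in M. x (\<lambda>\<eta>. l \<eta> * X \<eta>) \<omega> = l \<omega> * x X \<omega>"
    and monotone: "\<And>X X'. X \<in> Linf M B \<Longrightarrow> X' \<in> Linf M B \<Longrightarrow>
        (AE \<omega> in M. X' \<omega> \<le> X \<omega>) \<Longrightarrow> AE \<omega> in M. x X' \<omega> \<le> x X \<omega>"
    and cont_above: "\<And>Xs X. (\<And>n. Xs n \<in> Linf M B) \<Longrightarrow> X \<in> Linf M B \<Longrightarrow>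
        (AE \<omega> in M. \<forall>n. Xs (Suc n) \<omega> \<le> Xs n \<omega>) \<Longrightarrow>
        (AE \<omega> in M. (\<lambda>n. Xs n \<omega>) \<longlonglongrightarrow> X \<omega>) \<Longrightarrow>
        AE \<omega> in M. (\<forall>n. x (Xs (Suc n)) \<omega> \<le> x (Xs n) \<omega>) \<and> (\<lambda>n. x (Xs n) \<omega>) \<longlonglongrightarrow> x X \<omega>"
    and c_pos: "c > 0"
    and x1_ge: "AE \<omega> in M. c \<le> x (\<lambda>_. 1) \<omega>"
begin

interpretation P: prob_space M by (rule prob)

definition "x1 = x (\<lambda>_. 1)"
definition "y X = (\<lambda>\<omega>. x X \<omega> / x1 \<omega>)"

lemma subMA: "subalgebra M A"
  using subA subB unfolding subalgebra_def by auto

lemma sfA: "sigma_finite_subalgebra M A"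
  by (meson P.finite_measure_axioms finite_measure_subalgebra.intro finite_measure_subalgebra_axioms.intro finite_measure_subalgebra_is_sigma_finite subMA)

lemma sfB: "sigma_finite_subalgebra M B"
  by (meson P.finite_measure_axioms finite_measure_subalgebra.intro finite_measure_subalgebra_axioms.intro finite_measure_subalgebra_is_sigma_finite subB)

lemma measB_M: "f \<in> borel_measurable B \<Longrightarrow> f \<in> borel_measurable M"
  using measurable_from_subalg subB by blast

lemma measA_B: "f \<in> borel_measurable A \<Longrightarrow> f \<in> borel_measurable B"
  using measurable_from_subalg subA by blast

lemma setsB: "S \<in> sets B \<Longrightarrow> S \<in> sets M"
  using subB unfolding subalgebra_def by auto

lemma setsA: "S \<in> sets A \<Longrightarrow> S \<in> sets B"
  using subA unfolding subalgebra_def by auto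

lemma spaceB: "space B = space M" using subB unfolding subalgebra_def by auto
lemma spaceA: "space A = space M" using subA spaceB unfolding subalgebra_def by auto

lemma LinfI: "X \<in> borel_measurable B \<Longrightarrow> (AE \<omega> in M. \<bar>X \<omega>\<bar> \<le> C) \<Longrightarrow> X \<in> Linf M B"
  unfolding Linf_def by auto

lemma LinfD: "X \<in> Linf M B \<Longrightarrow> X \<in> borel_measurable B"
  unfolding Linf_def by auto

lemma LinfE: "X \<in> Linf M N \<Longrightarrow> (\<And>C. (AE \<omega> in M. \<bar>X \<omega>\<bar> \<le> C) \<Longrightarrow> thesis) \<Longrightarrow> thesis"
  unfolding Linf_def by auto

lemma LinfA_B: "X \<in> Linf M A \<Longrightarrow> X \<in> Linf M B"
  unfolding Linf_def using measA_B by auto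

lemma Linf_const: "(\<lambda>_. a) \<in> Linf M B"
  by (rule LinfI[where C="\<bar>a\<bar>"]) auto

lemma Linf_ind: "S \<in> sets B \<Longrightarrow> (indicator S :: 'a \<Rightarrow> real) \<in> Linf M B"
  by (rule LinfI[where C=1]) (auto split: split_indicator)

lemma Linf_indA: "S \<in> sets A \<Longrightarrow> (indicator S :: 'a \<Rightarrow> real) \<in> Linf M A"
  unfolding Linf_def by (auto split: split_indicator intro!: exI[where x=1])

lemma Linf_add: assumes X: "X \<in> Linf M B" and Y: "Y \<in> Linf M B"
  shows "(\<lambda>\<omega>. X \<omega> + Y \<omega>) \<in> Linf M B"
proof -
  obtain C where C: "AE \<omega> in M. \<bar>X \<omega>\<bar> \<le> C" using X by (rule LinfE)
  obtain D where D: "AE \<omega> in M. \<bar>Y \<omega>\<bar> \<le> D" using Y by (rule LinfE)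
  have [measurable]: "X \<in> borel_measurable B" "Y \<in> borel_measurable B" using X Y by (auto dest: LinfD)
  have "AE \<omega> in M. \<bar>X \<omega> + Y \<omega>\<bar> \<le> C + D" using C D by eventually_elim auto
  then show ?thesis by (intro LinfI) auto
qed

lemma Linf_mult: assumes X: "X \<in> Linf M B" and Y: "Y \<in> Linf M B"
  shows "(\<lambda>\<omega>. X \<omega> * Y \<omega>) \<in> Linf M B"
proof -
  obtain C where C: "AE \<omega> in M. \<bar>X \<omega>\<bar> \<le> C" using X by (rule LinfE)
  obtain D where D: "AE \<omega> in M. \<bar>Y \<omega>\<bar> \<le> D" using Y by (rule LinfE)
  have [measurable]: "X \<in> borel_measurable B" "Y \<in> borel_measurable B" using X Y by (auto dest: LinfD)
  have "AE \<omega> in M. \<bar>X \<omega> * Y \<omega>\<bar> \<le> C * D" using C D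
    by eventually_elim (auto simp: abs_mult intro: mult_mono)
  then show ?thesis by (intro LinfI) auto
qed

lemma Linf_cmult: "X \<in> Linf M B \<Longrightarrow> (\<lambda>\<omega>. a * X \<omega>) \<in> Linf M B"
  using Linf_mult[OF Linf_const] by blast

lemma x1_Linf: "x1 \<in> Linf M A" unfolding x1_def by (rule maps[OF Linf_const])

lemma x1_pos: "AE \<omega> in M. c \<le> x1 \<omega>" using x1_ge unfolding x1_def .

lemma x_meas: "X \<in> Linf M B \<Longrightarrow> x X \<in> borel_measurable A"
  using maps unfolding Linf_def by auto

lemma x1_meas: "x1 \<in> borel_measurable A" using x1_Linf unfolding Linf_def by auto

lemma y_measA: "X \<in> Linf M B \<Longrightarrow> y X \<in> borel_measurable A"
  unfolding y_def using x_meas x1_meas by (auto intro!: borel_measurable_divide)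

lemma y_Linf: "X \<in> Linf M B \<Longrightarrow> y X \<in> Linf M A"
proof -
  assume X: "X \<in> Linf M B"
  obtain C where C: "AE \<omega> in M. \<bar>x X \<omega>\<bar> \<le> C" using maps[OF X] by (rule LinfE)
  show ?thesis unfolding Linf_def
  proof (intro CollectI conjI exI)
    show "y X \<in> borel_measurable A" using y_measA X .
    show "AE \<omega> in M. \<bar>y X \<omega>\<bar> \<le> C / c"
      using C x1_pos
    proof eventually_elim
      case (elim \<omega>)
      have "\<bar>y X \<omega>\<bar> = \<bar>x X \<omega>\<bar> / x1 \<omega>" using elim c_pos by (simp add: y_def abs_div)
      also have "\<dots> \<le> C / x1 \<omega>" using elim c_pos by (simp add: divide_right_mono)
      also have "\<dots> \<le> C / c" using elim c_pos
        by (meson abs_ge_zero divide_left_mono dual_order.trans mult_pos_pos order_less_le_trans)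
      finally show ?case .
    qed
  qed
qed

lemma y_int: "X \<in> Linf M B \<Longrightarrow> integrable M (y X)"
proof -
  assume X: "X \<in> Linf M B"
  obtain C where C: "AE \<omega> in M. \<bar>y X \<omega>\<bar> \<le> C" using y_Linf[OF X] by (rule LinfE)
  show ?thesis
  proof (rule P.integrable_const_bound[where B=C])
    show "y X \<in> borel_measurable M" using y_measA[OF X] measB_M measA_B by blast
    show "AE \<omega> in M. norm (y X \<omega>) \<le> C" using C by eventually_elim auto
  qed
qed

lemma x_y: "AE \<omega> in M. x X \<omega> = x1 \<omega> * y X \<omega>"
  using x1_pos by eventually_elim (use c_pos in \<open>auto simp: y_def\<close>)

lemma y1: "AE \<omega> in M. y (\<lambda>_. 1) \<omega> = 1"
  using x1_pos by eventually_elim (use c_pos in \<open>auto simp: y_def x1_def\<close>)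

lemma y_add: assumes "X \<in> Linf M B" "Y \<in> Linf M B" shows
        "AE \<omega> in M. y (\<lambda>\<eta>. X \<eta> + Y \<eta>) \<omega> = y X \<omega> + y Y \<omega>"
  using additive[OF assms] unfolding y_def by eventually_elim (simp add: add_divide_distrib)

lemma y_scalar: assumes "X \<in> Linf M B" shows "AE \<omega> in M. y (\<lambda>\<eta>. a * X \<eta>) \<omega> = a * y X \<omega>"
  using scalar[OF assms, of a] unfolding y_def by eventually_elim simp

lemma y_homog: assumes "l \<in> Linf M A" "AE \<omega> in M. 0 \<le> l \<omega>" "X \<in> Linf M B" shows
        "AE \<omega> in M. y (\<lambda>\<eta>. l \<eta> * X \<eta>) \<omega> = l \<omega> * y X \<omega>"
  using A_homog[OF assms] unfolding y_def by eventually_elim simp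

lemma y_mono: assumes "X \<in> Linf M B" "X' \<in> Linf M B" "AE \<omega> in M. X' \<omega> \<le> X \<omega>"
  shows "AE \<omega> in M. y X' \<omega> \<le> y X \<omega>"
  using monotone[OF assms] x1_pos unfolding y_def 
  by eventually_elim (use c_pos in \<open>auto intro: divide_right_mono\<close>)

lemma y0: "AE \<omega> in M. y (\<lambda>_. 0) \<omega> = 0"
proof -
  have "AE \<omega> in M. y (\<lambda>\<eta>. 0 * 1) \<omega> = 0 * y (\<lambda>_. 1) \<omega>"
    by (rule y_scalar[where X="\<lambda>_. 1" and a=0, OF Linf_const])
  then show ?thesis by (simp only: mult_zero_left)
qed

lemma y_cong: "X \<in> Linf M B \<Longrightarrow> X' \<in> Linf M B \<Longrightarrow>
        (AE \<omega> in M. X' \<omega> = X \<omega>) \<Longrightarrow> AE \<omega> in M. y X' \<omega> = y X \<omega>"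
proof -
  assume a: "X \<in> Linf M B" "X' \<in> Linf M B" "AE \<omega> in M. X' \<omega> = X \<omega>"
  have "AE \<omega> in M. y X' \<omega> \<le> y X \<omega>" by (rule y_mono) (use a in \<open>auto elim: AE_mp\<close>)
  moreover have "AE \<omega> in M. y X \<omega> \<le> y X' \<omega>" by (rule y_mono) (use a in \<open>auto elim: AE_mp\<close>)
  ultimately show ?thesis by eventually_elim auto
qed

lemma y_nonneg: assumes "X \<in> Linf M B" "AE \<omega> in M. 0 \<le> X \<omega>" shows "AE \<omega> in M. 0 \<le> y X \<omega>"
  using y_mono[OF assms(1) Linf_const assms(2)] y0 by eventually_elim auto

lemma y_const: "AE \<omega> in M. y (\<lambda>_. a) \<omega> = a"
proof -
  have "AE \<omega> in M. y (\<lambda>\<eta>. a * 1) \<omega> = a * y (\<lambda>_. 1) \<omega>"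
    by (rule y_scalar[where X="\<lambda>_. 1" and a=a, OF Linf_const])
  then show ?thesis using y1 by eventually_elim (simp only: mult_1_right)
qed

lemma Linf_int: assumes X: "X \<in> Linf M B" shows "integrable M X"
proof -
  obtain C where C: "AE \<omega> in M. \<bar>X \<omega>\<bar> \<le> C" using X by (rule LinfE)
  show ?thesis
  proof (rule P.integrable_const_bound[where B=C])
    show "X \<in> borel_measurable M" using LinfD[OF X] measB_M by blast
    show "AE \<omega> in M. norm (X \<omega>) \<le> C" using C by eventually_elim auto
  qed
qed

lemma Linf_int_mult: assumes X: "X \<in> Linf M B" and g: "integrable M g"
  shows "integrable M (\<lambda>\<omega>. g \<omega> * X \<omega>)"
proof -
  obtain C where C: "AE \<omega> in M. \<bar>X \<omega>\<bar> \<le> C" using X by (rule LinfE)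
  show ?thesis
  proof (rule Bochner_Integration.integrable_bound[where f="\<lambda>\<omega>. C * g \<omega>"])
    show "integrable M (\<lambda>\<omega>. C * g \<omega>)" using g by simp
    show "(\<lambda>\<omega>. g \<omega> * X \<omega>) \<in> borel_measurable M" using LinfD[OF X] measB_M borel_measurable_integrable[OF g] by (auto intro!: borel_measurable_times)
    show "AE \<omega> in M. norm (g \<omega> * X \<omega>) \<le> norm (C * g \<omega>)" using C
    proof eventually_elim
      case (elim \<omega>)
      have "0 \<le> C" using elim by linarith
      then show ?case using elim by (simp add: abs_mult mult.commute[of "\<bar>g \<omega>\<bar>"] mult_right_mono)
    qed
  qed
qed


definition "nu S = ennreal (\<integral>\<omega>. y (indicator S) \<omega> \<partial>M)"

lemma y_ind_bounds: assumes S: "S \<in> sets B"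
  shows "AE \<omega> in M. 0 \<le> y (indicator S) \<omega> \<and> y (indicator S) \<omega> \<le> 1"
proof -
  have "AE \<omega> in M. 0 \<le> y (indicator S) \<omega>"
    by (rule y_nonneg[OF Linf_ind[OF S]]) auto
  moreover have "AE \<omega> in M. y (indicator S) \<omega> \<le> y (\<lambda>_. 1) \<omega>"
    by (rule y_mono[OF Linf_const Linf_ind[OF S]]) (auto split: split_indicator)
  ultimately show ?thesis using y1 by eventually_elim auto
qed

lemma int_y_ind_nonneg: "S \<in> sets B \<Longrightarrow> 0 \<le> (\<integral>\<omega>. y (indicator S) \<omega> \<partial>M)"
  using y_ind_bounds by (intro integral_nonneg_AE) (auto elim: AE_mp)

lemma nu_additive: assumes S: "S \<in> sets B" and T: "T \<in> sets B" and d: "S \<inter> T = {}"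
  shows "nu (S \<union> T) = nu S + nu T"
proof -
  have eq: "(indicator (S \<union> T) :: 'a \<Rightarrow> real) = (\<lambda>\<eta>. indicator S \<eta> + indicator T \<eta>)"
    using d by (auto simp: fun_eq_iff split: split_indicator)
  have "AE \<omega> in M. y (indicator (S \<union> T)) \<omega> = y (indicator S) \<omega> + y (indicator T) \<omega>"
    unfolding eq by (rule y_add[OF Linf_ind[OF S] Linf_ind[OF T]])
  then have "(\<integral>\<omega>. y (indicator (S \<union> T)) \<omega> \<partial>M) = (\<integral>\<omega>. y (indicator S) \<omega> + y (indicator T) \<omega> \<partial>M)"
    by (rule integral_cong_AE[rotated 2]) (use y_int Linf_ind S T in \<open>auto intro!: borel_measurable_integrable\<close>)
  also have "\<dots> = (\<integral>\<omega>. y (indicator S) \<omega> \<partial>M) + (\<integral>\<omega>. y (indicator T) \<omega> \<partial>M)"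
    by (rule Bochner_Integration.integral_add[OF y_int[OF Linf_ind[OF S]] y_int[OF Linf_ind[OF T]]])
  finally show ?thesis unfolding nu_def
    using int_y_ind_nonneg[OF S] int_y_ind_nonneg[OF T] by (simp add: ennreal_plus)
qed

lemma nu_cont: assumes r: "range As \<subseteq> sets B" and dec: "decseq As" and e: "(\<Inter>i. As i) = {}"
  shows "(\<lambda>i. nu (As i)) \<longlonglongrightarrow> 0"
proof -
  let ?Xs = "\<lambda>n. (indicator (As n) :: 'a \<Rightarrow> real)"
  have L: "\<And>n. ?Xs n \<in> Linf M B" using r by (auto intro: Linf_ind)
  have "AE \<omega> in M. (\<forall>n. x (?Xs (Suc n)) \<omega> \<le> x (?Xs n) \<omega>) \<and> (\<lambda>n. x (?Xs n) \<omega>) \<longlonglongrightarrow> x (\<lambda>_. 0) \<omega>"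
  proof (rule cont_above[OF L Linf_const])
    show "AE \<omega> in M. \<forall>n. ?Xs (Suc n) \<omega> \<le> ?Xs n \<omega>"
    proof (rule AE_I2, rule allI)
      fix \<omega> n
      have "As (Suc n) \<subseteq> As n" using dec by (simp add: decseq_Suc_iff)
      then show "?Xs (Suc n) \<omega> \<le> ?Xs n \<omega>" by (auto split: split_indicator)
    qed
    show "AE \<omega> in M. (\<lambda>n. ?Xs n \<omega>) \<longlonglongrightarrow> 0"
    proof (intro AE_I2 tendsto_eventually)
      fix \<omega>
      obtain n where "\<omega> \<notin> As n" using e by auto
      then have "\<forall>m\<ge>n. \<omega> \<notin> As m" using dec by (auto simp: decseq_def)
      then show "\<forall>\<^sub>F m in sequentially. ?Xs m \<omega> = 0"
        by (auto simp: eventually_sequentially split: split_indicator intro!: exI[of _ n])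
    qed
  qed
  then have lim: "AE \<omega> in M. (\<lambda>n. y (?Xs n) \<omega>) \<longlonglongrightarrow> 0"
    using y0 x1_pos
  proof eventually_elim
    case (elim \<omega>)
    then have "(\<lambda>n. x (?Xs n) \<omega> / x1 \<omega>) \<longlonglongrightarrow> x (\<lambda>_. 0) \<omega> / x1 \<omega>"
      using c_pos by (intro tendsto_divide tendsto_const) auto
    moreover have "x (\<lambda>_. 0) \<omega> / x1 \<omega> = 0" using elim unfolding y_def by blast
    ultimately show ?case unfolding y_def by simp
  qed
  have "(\<lambda>n. \<integral>\<omega>. y (?Xs n) \<omega> \<partial>M) \<longlonglongrightarrow> (\<integral>\<omega>. 0 \<partial>M)"
  proof (rule integral_dominated_convergence[where w="\<lambda>_. 1"])
    show "(\<lambda>\<omega>. 0::real) \<in> borel_measurable M" by simp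
    show "\<And>n. y (?Xs n) \<in> borel_measurable M" using y_int L by auto
    show "integrable M (\<lambda>_. 1::real)" by simp
    show "AE \<omega> in M. (\<lambda>n. y (?Xs n) \<omega>) \<longlonglongrightarrow> 0" by (rule lim)
    show "AE \<omega> in M. norm (y (?Xs n) \<omega>) \<le> 1" for n
    proof -
      have "As n \<in> sets B" using r by auto
      from y_ind_bounds[OF this] show ?thesis by eventually_elim auto
    qed
  qed
  then have "(\<lambda>n. \<integral>\<omega>. y (?Xs n) \<omega> \<partial>M) \<longlonglongrightarrow> 0" by simp
  then have "(\<lambda>n. ennreal (\<integral>\<omega>. y (?Xs n) \<omega> \<partial>M)) \<longlonglongrightarrow> ennreal 0" by (rule tendsto_ennrealI)
  then show ?thesis by (simp add: nu_def)
qed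

definition "N = measure_of (space B) (sets B) nu"

lemma nu_pos: "positive (sets B) nu"
proof -
  have "(indicator {} :: 'a \<Rightarrow> real) = (\<lambda>_. 0)" by auto
  then have "AE \<omega> in M. y (indicator {}) \<omega> = 0" using y0 by simp
  then have "(\<integral>\<omega>. y (indicator {}) \<omega> \<partial>M) = (\<integral>\<omega>. 0 \<partial>M)"
    by (intro integral_cong_AE) (use y_int[OF Linf_ind[of "{}"]] in \<open>auto intro!: borel_measurable_integrable\<close>)
  then have "nu {} = 0" by (simp add: nu_def)
  then show ?thesis by (simp add: positive_def)
qed

lemma ringB: "ring_of_sets (space B) (sets B)"
  using sets.sigma_algebra_axioms[of B] unfolding sigma_algebra_def algebra_def by blast

lemma nu_ca: "countably_additive (sets B) nu"
proof (rule ring_of_sets.empty_continuous_imp_countably_additive[OF ringB nu_pos])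
  show "additive (sets B) nu" unfolding additive_def using nu_additive by blast
  show "\<forall>S\<in>sets B. nu S \<noteq> \<infinity>" by (simp add: nu_def)
qed (rule nu_cont)

lemma emeasure_N: "S \<in> sets B \<Longrightarrow> emeasure N S = nu S"
  unfolding N_def by (rule emeasure_measure_of_sigma[OF sets.sigma_algebra_axioms nu_pos nu_ca])

lemma sets_N: "sets N = sets B" unfolding N_def by (rule sets.sets_measure_of_eq)
lemma space_N: "space N = space B" unfolding N_def by (rule sets.space_measure_of_eq)


abbreviation "MB \<equiv> restr_to_subalg M B"

lemma sets_MB: "sets MB = sets B" by (rule sets_restr_to_subalg[OF subB])
lemma space_MB: "space MB = space M" by (rule space_restr_to_subalg)

lemma ac: "absolutely_continuous MB N"
  unfolding absolutely_continuous_def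
proof
  fix S assume "S \<in> null_sets MB"
  then have S: "S \<in> null_sets M" "S \<in> sets B" using null_sets_restr_to_subalg[OF subB] by auto
  have "AE \<omega> in M. indicator S \<omega> = (0::real)" using AE_not_in[OF S(1)] by eventually_elim simp
  then have "AE \<omega> in M. y (indicator S) \<omega> = y (\<lambda>_. 0) \<omega>"
    by (rule y_cong[OF Linf_const Linf_ind[OF S(2)]])
  then have "AE \<omega> in M. y (indicator S) \<omega> = 0" using y0 by eventually_elim simp
  then have "(\<integral>\<omega>. y (indicator S) \<omega> \<partial>M) = 0" by (rule integral_eq_zero_AE)
  then have "emeasure N S = 0" using emeasure_N[OF S(2)] by (simp add: nu_def)
  then show "S \<in> null_sets N" using S(2) sets_N by (auto intro: null_setsI)
qed

lemma exists_f: "\<exists>f. f \<in> borel_measurable B \<and> (\<forall>\<omega>. 0 \<le> f \<omega>) \<and> integrable M f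
   \<and> density MB (\<lambda>\<omega>. ennreal (f \<omega>)) = N"
proof -
  interpret MBs: sigma_finite_measure MB using sfB sigma_finite_subalgebra.sigma_fin_subalg by blast
  obtain fe where fe: "fe \<in> borel_measurable MB" "density MB fe = N"
    using MBs.Radon_Nikodym[OF ac] sets_N sets_MB by auto
  have feB[measurable]: "fe \<in> borel_measurable B" using measurable_in_subalg'[OF subB fe(1)] .
  have "emeasure N (space M) = (\<integral>\<^sup>+\<omega>. fe \<omega> * indicator (space M) \<omega> \<partial>MB)"
    using emeasure_density[OF fe(1) sets.top[of MB]] fe(2) space_MB by simp
  also have "\<dots> = (\<integral>\<^sup>+\<omega>. fe \<omega> \<partial>MB)"
    by (rule nn_integral_cong) (simp add: space_MB)
  finally have eqN: "emeasure N (space M) = (\<integral>\<^sup>+\<omega>. fe \<omega> \<partial>MB)" .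
  have "emeasure N (space M) = nu (space M)" using emeasure_N[OF sets.top[of B]] spaceB by simp
  then have fin: "(\<integral>\<^sup>+\<omega>. fe \<omega> \<partial>MB) \<noteq> \<infinity>" using eqN by (simp add: nu_def)
  have aefin: "AE \<omega> in MB. fe \<omega> \<noteq> \<infinity>" by (rule nn_integral_PInf_AE[OF fe(1) fin])
  define f where "f \<omega> = enn2real (fe \<omega>)" for \<omega>
  have fB[measurable]: "f \<in> borel_measurable B" unfolding f_def by measurable
  have fMB: "f \<in> borel_measurable MB" using measurable_in_subalg[OF subB fB] .
  have ae: "AE \<omega> in MB. ennreal (f \<omega>) = fe \<omega>"
    using aefin by eventually_elim (simp add: f_def less_top)
  have dens: "density MB (\<lambda>\<omega>. ennreal (f \<omega>)) = N"
    using density_cong[OF _ fe(1) ae] fMB fe(2) by simp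
  have "(\<integral>\<^sup>+\<omega>. ennreal (f \<omega>) \<partial>MB) = (\<integral>\<^sup>+\<omega>. fe \<omega> \<partial>MB)"
    by (rule nn_integral_cong_AE[OF ae])
  then have "integrable MB f" using fin fMB
    by (intro integrableI_nonneg) (auto simp: f_def less_top)
  then have "integrable M f" by (rule integrable_from_subalg[OF subB])
  moreover have "\<forall>\<omega>. 0 \<le> f \<omega>" by (simp add: f_def)
  ultimately show ?thesis using fB dens by blast
qed

definition "fB = (SOME f. f \<in> borel_measurable B \<and> (\<forall>\<omega>. 0 \<le> f \<omega>) \<and> integrable M f
   \<and> density MB (\<lambda>\<omega>. ennreal (f \<omega>)) = N)"

lemma fB: "fB \<in> borel_measurable B" "\<And>\<omega>. 0 \<le> fB \<omega>" "integrable M fB"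
   "density MB (\<lambda>\<omega>. ennreal (fB \<omega>)) = N"
  using someI_ex[OF exists_f] unfolding fB_def[symmetric] by auto

lemma fB_ind: assumes S: "S \<in> sets B"
  shows "(\<integral>\<omega>. fB \<omega> * indicator S \<omega> \<partial>M) = (\<integral>\<omega>. y (indicator S) \<omega> \<partial>M)"
proof -
  have [measurable]: "fB \<in> borel_measurable B" "S \<in> sets B" using fB S by auto
  have fMB[measurable]: "fB \<in> borel_measurable MB" using measurable_in_subalg[OF subB fB(1)] .
  have SMB: "S \<in> sets MB" using S sets_MB by simp
  have "(\<integral>\<omega>. fB \<omega> * indicator S \<omega> \<partial>M) = (\<integral>\<omega>. fB \<omega> * indicator S \<omega> \<partial>MB)"
    by (rule integral_subalgebra2[OF subB, symmetric]) measurable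
  also have "\<dots> = enn2real (\<integral>\<^sup>+\<omega>. ennreal (fB \<omega> * indicator S \<omega>) \<partial>MB)"
    by (rule integral_eq_nn_integral) (use SMB fB(2) in auto)
  also have "(\<integral>\<^sup>+\<omega>. ennreal (fB \<omega> * indicator S \<omega>) \<partial>MB) = (\<integral>\<^sup>+\<omega>. ennreal (fB \<omega>) * indicator S \<omega> \<partial>MB)"
    by (rule nn_integral_cong) (simp split: split_indicator)
  also have "\<dots> = emeasure N S"
    using emeasure_density[of "\<lambda>\<omega>. ennreal (fB \<omega>)" MB S] SMB fB(4) by simp
  also have "\<dots> = nu S" by (rule emeasure_N[OF S])
  finally show ?thesis using int_y_ind_nonneg[OF S] by (simp add: nu_def)
qed


lemma Linf_bdd: assumes "u \<in> borel_measurable B" "\<And>\<omega>. \<omega> \<in> space M \<Longrightarrow> \<bar>u \<omega>\<bar> \<le> C"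
  shows "u \<in> Linf M B"
  by (rule LinfI[OF assms(1)]) (use assms(2) in \<open>auto intro: AE_I2\<close>)

lemma Linf_neg: assumes "X \<in> Linf M B" shows "(\<lambda>\<omega>. - X \<omega>) \<in> Linf M B"
  using Linf_cmult[OF assms, of "-1"] by simp

lemma x_neg: assumes "X \<in> Linf M B" shows "AE \<omega> in M. x (\<lambda>\<eta>. - X \<eta>) \<omega> = - x X \<omega>"
  using scalar[OF assms, of "-1"] by simp

lemma int_fB_X: "X \<in> Linf M B \<Longrightarrow> integrable M (\<lambda>\<omega>. fB \<omega> * X \<omega>)"
  using Linf_int_mult fB(3) by blast

lemma core_nonneg:
  assumes u: "u \<in> borel_measurable B" "\<And>\<omega>. 0 \<le> u \<omega>"
  shows "(\<exists>C. \<forall>\<omega>\<in>space M. u \<omega> \<le> C) \<longrightarrow> (\<integral>\<omega>. fB \<omega> * u \<omega> \<partial>M) = (\<integral>\<omega>. y u \<omega> \<partial>M)"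
  using u
proof (induction u rule: borel_measurable_induct_real)
  case (set S)
  then show ?case using fB_ind by blast
next
  case (mult u c)
  show ?case
  proof
    assume "\<exists>C. \<forall>\<omega>\<in>space M. c * u \<omega> \<le> C"
    then obtain C where C: "\<forall>\<omega>\<in>space M. c * u \<omega> \<le> C" by blast
    show "(\<integral>\<omega>. fB \<omega> * (c * u \<omega>) \<partial>M) = (\<integral>\<omega>. y (\<lambda>\<omega>. c * u \<omega>) \<omega> \<partial>M)"
    proof (cases "c = 0")
      case True
      have "(\<lambda>\<omega>. c * u \<omega>) = (\<lambda>_. 0)" using True by simp
      then have "AE \<omega> in M. y (\<lambda>\<omega>. c * u \<omega>) \<omega> = 0" using y0 by simp
      then have "(\<integral>\<omega>. y (\<lambda>\<omega>. c * u \<omega>) \<omega> \<partial>M) = 0" by (rule integral_eq_zero_AE)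
      then show ?thesis using True by simp
    next
      case False
      then have cp: "0 < c" using mult by simp
      have "\<forall>\<omega>\<in>space M. u \<omega> \<le> C / c" using C cp by (simp add: le_divide_eq mult.commute)
      then have IH: "(\<integral>\<omega>. fB \<omega> * u \<omega> \<partial>M) = (\<integral>\<omega>. y u \<omega> \<partial>M)" using mult by blast
      have uL: "u \<in> Linf M B"
        by (rule Linf_bdd[where C="C/c"]) (use mult \<open>\<forall>\<omega>\<in>space M. u \<omega> \<le> C / c\<close> in auto)
      have "(\<integral>\<omega>. y (\<lambda>\<omega>. c * u \<omega>) \<omega> \<partial>M) = (\<integral>\<omega>. c * y u \<omega> \<partial>M)"
        by (rule integral_cong_AE)
          (use y_scalar[OF uL, of c] y_int[OF uL] y_int[OF Linf_cmult[OF uL, of c]] in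
            \<open>auto intro: borel_measurable_integrable\<close>)
      also have "\<dots> = c * (\<integral>\<omega>. fB \<omega> * u \<omega> \<partial>M)" using IH by simp
      also have "\<dots> = (\<integral>\<omega>. fB \<omega> * (c * u \<omega>) \<partial>M)"
        by (simp add: mult.left_commute)
      finally show ?thesis by simp
    qed
  qed
next
  case (add u v)
  show ?case
  proof
    assume "\<exists>C. \<forall>\<omega>\<in>space M. v \<omega> + u \<omega> \<le> C"
    then obtain C where C: "\<forall>\<omega>\<in>space M. v \<omega> + u \<omega> \<le> C" by blast
    have ub: "\<forall>\<omega>\<in>space M. u \<omega> \<le> C" "\<forall>\<omega>\<in>space M. v \<omega> \<le> C"
    proof -
      have nn: "\<And>\<omega>. 0 \<le> u \<omega>" "\<And>\<omega>. 0 \<le> v \<omega>" using add by auto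
      show "\<forall>\<omega>\<in>space M. u \<omega> \<le> C" "\<forall>\<omega>\<in>space M. v \<omega> \<le> C"
      proof safe
        fix \<omega> assume "\<omega> \<in> space M"
        then have "v \<omega> + u \<omega> \<le> C" using C by blast
        then show "u \<omega> \<le> C" "v \<omega> \<le> C" using nn[of \<omega>] by linarith+
      qed
    qed
    have uL: "u \<in> Linf M B" by (rule Linf_bdd[where C=C]) (use add ub in auto)
    have vL: "v \<in> Linf M B" by (rule Linf_bdd[where C=C]) (use add ub in auto)
    have IHu: "(\<integral>\<omega>. fB \<omega> * u \<omega> \<partial>M) = (\<integral>\<omega>. y u \<omega> \<partial>M)" using add ub by blast
    have IHv: "(\<integral>\<omega>. fB \<omega> * v \<omega> \<partial>M) = (\<integral>\<omega>. y v \<omega> \<partial>M)" using add ub by blast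
    have "(\<integral>\<omega>. fB \<omega> * (v \<omega> + u \<omega>) \<partial>M) = (\<integral>\<omega>. fB \<omega> * v \<omega> + fB \<omega> * u \<omega> \<partial>M)"
      by (simp add: distrib_left)
    also have "\<dots> = (\<integral>\<omega>. fB \<omega> * v \<omega> \<partial>M) + (\<integral>\<omega>. fB \<omega> * u \<omega> \<partial>M)"
      by (rule Bochner_Integration.integral_add[OF int_fB_X[OF vL] int_fB_X[OF uL]])
    also have "\<dots> = (\<integral>\<omega>. y v \<omega> \<partial>M) + (\<integral>\<omega>. y u \<omega> \<partial>M)" using IHu IHv by simp
    also have "\<dots> = (\<integral>\<omega>. y v \<omega> + y u \<omega> \<partial>M)"
      by (rule Bochner_Integration.integral_add[OF y_int[OF vL] y_int[OF uL], symmetric])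
    also have "\<dots> = (\<integral>\<omega>. y (\<lambda>\<omega>. v \<omega> + u \<omega>) \<omega> \<partial>M)"
    proof (rule integral_cong_AE)
      show "AE \<omega> in M. y v \<omega> + y u \<omega> = y (\<lambda>\<omega>. v \<omega> + u \<omega>) \<omega>"
        using y_add[OF vL uL] by eventually_elim simp
      show "(\<lambda>\<omega>. y v \<omega> + y u \<omega>) \<in> borel_measurable M"
        using borel_measurable_integrable[OF y_int[OF vL]] borel_measurable_integrable[OF y_int[OF uL]]
        by (rule borel_measurable_add)
      show "y (\<lambda>\<omega>. v \<omega> + u \<omega>) \<in> borel_measurable M"
        by (rule borel_measurable_integrable[OF y_int[OF Linf_add[OF vL uL]]])
    qed
    finally show "(\<integral>\<omega>. fB \<omega> * (v \<omega> + u \<omega>) \<partial>M) = (\<integral>\<omega>. y (\<lambda>\<omega>. v \<omega> + u \<omega>) \<omega> \<partial>M)" .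
  qed
next
  case (seq U)
  show ?case
  proof
    assume "\<exists>C. \<forall>\<omega>\<in>space M. u \<omega> \<le> C"
    then obtain C where C: "\<forall>\<omega>\<in>space M. u \<omega> \<le> C" by blast
    have Ule: "U i \<omega> \<le> u \<omega>" if "\<omega> \<in> space M" for i \<omega>
    proof (rule incseq_le)
      show "incseq (\<lambda>i. U i \<omega>)" using seq.hyps(3) by (simp add: incseq_def le_fun_def)
      show "(\<lambda>i. U i \<omega>) \<longlonglongrightarrow> u \<omega>" using seq.hyps(4) that spaceB by simp
    qed
    have uL: "u \<in> Linf M B" by (rule Linf_bdd[where C=C]) (use u C in auto)
    have UL: "U i \<in> Linf M B" for i
    proof (rule Linf_bdd[where C=C])
      show "U i \<in> borel_measurable B" using seq by auto
      fix \<omega> assume w: "\<omega> \<in> space M"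
      have "0 \<le> U i \<omega>" "U i \<omega> \<le> u \<omega>" "u \<omega> \<le> C" using seq.hyps(2) Ule[OF w] C w by auto
      then show "\<bar>U i \<omega>\<bar> \<le> C" by simp
    qed
    have IH: "(\<integral>\<omega>. fB \<omega> * U i \<omega> \<partial>M) = (\<integral>\<omega>. y (U i) \<omega> \<partial>M)" for i
      using seq.IH[of i] C Ule by (meson order_trans)
    have lim1: "(\<lambda>i. \<integral>\<omega>. fB \<omega> * U i \<omega> \<partial>M) \<longlonglongrightarrow> (\<integral>\<omega>. fB \<omega> * u \<omega> \<partial>M)"
    proof (rule integral_dominated_convergence[where w="\<lambda>\<omega>. C * fB \<omega>"])
      show "(\<lambda>\<omega>. fB \<omega> * u \<omega>) \<in> borel_measurable M"
        using borel_measurable_integrable[OF int_fB_X[OF uL]] .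
      show "(\<lambda>\<omega>. fB \<omega> * U i \<omega>) \<in> borel_measurable M" for i
        using borel_measurable_integrable[OF int_fB_X[OF UL]] .
      show "integrable M (\<lambda>\<omega>. C * fB \<omega>)" using fB(3) by simp
      show "AE \<omega> in M. (\<lambda>i. fB \<omega> * U i \<omega>) \<longlonglongrightarrow> fB \<omega> * u \<omega>"
      proof (rule AE_I2)
        fix \<omega> assume "\<omega> \<in> space M"
        then have "(\<lambda>i. U i \<omega>) \<longlonglongrightarrow> u \<omega>" using seq.hyps(4) spaceB by simp
        then show "(\<lambda>i. fB \<omega> * U i \<omega>) \<longlonglongrightarrow> fB \<omega> * u \<omega>" by (rule tendsto_mult_left)
      qed
      show "AE \<omega> in M. norm (fB \<omega> * U i \<omega>) \<le> C * fB \<omega>" for i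
      proof (rule AE_I2)
        fix \<omega> assume w: "\<omega> \<in> space M"
        have "0 \<le> U i \<omega>" using seq.hyps(2) by auto
        have "U i \<omega> \<le> C" using order_trans[OF Ule[OF w] bspec[OF C w]] .
        then show "norm (fB \<omega> * U i \<omega>) \<le> C * fB \<omega>"
          using fB(2)[of \<omega>] \<open>0 \<le> U i \<omega>\<close> \<open>U i \<omega> \<le> C\<close>
          by (simp add: abs_mult mult.commute mult_right_mono)
      qed
    qed
    have "AE \<omega> in M. (\<forall>n. x (\<lambda>\<eta>. - U (Suc n) \<eta>) \<omega> \<le> x (\<lambda>\<eta>. - U n \<eta>) \<omega>) \<and>
            (\<lambda>n. x (\<lambda>\<eta>. - U n \<eta>) \<omega>) \<longlonglongrightarrow> x (\<lambda>\<eta>. - u \<eta>) \<omega>"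
    proof (rule cont_above[where Xs="\<lambda>n \<eta>. - U n \<eta>"])
      show "(\<lambda>\<eta>. - U n \<eta>) \<in> Linf M B" for n by (rule Linf_neg[OF UL])
      show "(\<lambda>\<eta>. - u \<eta>) \<in> Linf M B" by (rule Linf_neg[OF uL])
      show "AE \<omega> in M. \<forall>n. - U (Suc n) \<omega> \<le> - U n \<omega>"
        using seq.hyps(3) by (intro AE_I2) (auto simp: incseq_Suc_iff le_fun_def)
      show "AE \<omega> in M. (\<lambda>n. - U n \<omega>) \<longlonglongrightarrow> - u \<omega>"
      proof (rule AE_I2)
        fix \<omega> assume "\<omega> \<in> space M"
        then have "(\<lambda>i. U i \<omega>) \<longlonglongrightarrow> u \<omega>" using seq.hyps(4) spaceB by simp
        then show "(\<lambda>n. - U n \<omega>) \<longlonglongrightarrow> - u \<omega>" by (rule tendsto_minus)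
      qed
    qed
    moreover have "AE \<omega> in M. \<forall>n. x (\<lambda>\<eta>. - U n \<eta>) \<omega> = - x (U n) \<omega>"
      using x_neg[OF UL] by (simp add: AE_all_countable)
    moreover have "AE \<omega> in M. x (\<lambda>\<eta>. - u \<eta>) \<omega> = - x u \<omega>" by (rule x_neg[OF uL])
    ultimately have limAE: "AE \<omega> in M. (\<lambda>n. y (U n) \<omega>) \<longlonglongrightarrow> y u \<omega>" using x1_pos
    proof eventually_elim
      case (elim \<omega>)
      then have "(\<lambda>n. - x (U n) \<omega>) \<longlonglongrightarrow> - x u \<omega>" by simp
      then have "(\<lambda>n. x (U n) \<omega>) \<longlonglongrightarrow> x u \<omega>" by (rule tendsto_minus_cancel)
      moreover have "x1 \<omega> \<noteq> 0" using elim(4) c_pos by linarith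
      ultimately show ?case unfolding y_def by (intro tendsto_divide tendsto_const)
    qed
    have lim2: "(\<lambda>i. \<integral>\<omega>. y (U i) \<omega> \<partial>M) \<longlonglongrightarrow> (\<integral>\<omega>. y u \<omega> \<partial>M)"
    proof (rule integral_dominated_convergence[where w="\<lambda>\<omega>. \<bar>y u \<omega>\<bar>"])
      show "AE \<omega> in M. (\<lambda>n. y (U n) \<omega>) \<longlonglongrightarrow> y u \<omega>" by (rule limAE)
      show "y u \<in> borel_measurable M" using borel_measurable_integrable[OF y_int[OF uL]] .
      show "y (U i) \<in> borel_measurable M" for i using borel_measurable_integrable[OF y_int[OF UL]] .
      show "integrable M (\<lambda>\<omega>. \<bar>y u \<omega>\<bar>)" using y_int[OF uL] by simp
      show "AE \<omega> in M. norm (y (U i) \<omega>) \<le> \<bar>y u \<omega>\<bar>" for i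
      proof -
        have "AE \<omega> in M. 0 \<le> y (U i) \<omega>" by (rule y_nonneg[OF UL]) (use seq.hyps(2) in auto)
        moreover have "AE \<omega> in M. y (U i) \<omega> \<le> y u \<omega>"
          by (rule y_mono[OF uL UL]) (use Ule in \<open>auto intro: AE_I2\<close>)
        ultimately show ?thesis by eventually_elim auto
      qed
    qed
    have "(\<lambda>i. \<integral>\<omega>. fB \<omega> * U i \<omega> \<partial>M) = (\<lambda>i. \<integral>\<omega>. y (U i) \<omega> \<partial>M)"
      using IH by (rule ext)
    then have lim3: "(\<lambda>i. \<integral>\<omega>. fB \<omega> * U i \<omega> \<partial>M) \<longlonglongrightarrow> (\<integral>\<omega>. y u \<omega> \<partial>M)"
      using lim2 by (simp only:)
    show "(\<integral>\<omega>. fB \<omega> * u \<omega> \<partial>M) = (\<integral>\<omega>. y u \<omega> \<partial>M)"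
      by (rule LIMSEQ_unique[OF lim1 lim3])
  qed
qed


lemma int_y_const: "(\<integral>\<omega>. y (\<lambda>_. a) \<omega> \<partial>M) = a"
proof -
  have "(\<integral>\<omega>. y (\<lambda>_. a) \<omega> \<partial>M) = (\<integral>\<omega>. a \<partial>M)"
    by (rule integral_cong_AE) (use y_const[of a] y_int[OF Linf_const] in \<open>auto intro: borel_measurable_integrable\<close>)
  then show ?thesis by (simp add: P.prob_space)
qed

lemma int_fB: "(\<integral>\<omega>. fB \<omega> \<partial>M) = 1"
proof -
  have "(\<integral>\<omega>. fB \<omega> * 1 \<partial>M) = (\<integral>\<omega>. y (\<lambda>_. 1) \<omega> \<partial>M)"
    using core_nonneg[of "\<lambda>_. 1"] by auto
  then show ?thesis using int_y_const[of 1] by simp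
qed

lemma core: assumes X: "X \<in> Linf M B"
  shows "(\<integral>\<omega>. fB \<omega> * X \<omega> \<partial>M) = (\<integral>\<omega>. y X \<omega> \<partial>M)"
proof -
  obtain C0 where C0: "AE \<omega> in M. \<bar>X \<omega>\<bar> \<le> C0" using X by (rule LinfE)
  define C where "C = \<bar>C0\<bar>"
  have C: "AE \<omega> in M. \<bar>X \<omega>\<bar> \<le> C" using C0 unfolding C_def by eventually_elim auto
  have Cnn: "0 \<le> C" unfolding C_def by simp
  have XB[measurable]: "X \<in> borel_measurable B" using LinfD[OF X] .
  define X2 where "X2 \<omega> = max (- C) (min C (X \<omega>))" for \<omega>
  have X2B[measurable]: "X2 \<in> borel_measurable B" unfolding X2_def by measurable
  have X2eq: "AE \<omega> in M. X2 \<omega> = X \<omega>" using C by eventually_elim (auto simp: X2_def)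
  have X2L: "X2 \<in> Linf M B" by (rule Linf_bdd[where C=C]) (use Cnn in \<open>auto simp: X2_def\<close>)
  define u where "u \<omega> = X2 \<omega> + C" for \<omega>
  have uB: "u \<in> borel_measurable B" unfolding u_def by measurable
  have unn: "\<And>\<omega>. 0 \<le> u \<omega>" unfolding u_def X2_def by auto
  have uL: "u \<in> Linf M B" unfolding u_def[abs_def] by (rule Linf_add[OF X2L Linf_const])
  have ub: "\<forall>\<omega>\<in>space M. u \<omega> \<le> 2 * C" unfolding u_def X2_def using Cnn by auto
  have uy: "(\<integral>\<omega>. fB \<omega> * u \<omega> \<partial>M) = (\<integral>\<omega>. y u \<omega> \<partial>M)"
    using core_nonneg[OF uB unn] ub by blast
  have "(\<integral>\<omega>. fB \<omega> * u \<omega> \<partial>M) = (\<integral>\<omega>. fB \<omega> * X2 \<omega> + C * fB \<omega> \<partial>M)"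
    unfolding u_def by (simp add: algebra_simps)
  also have "\<dots> = (\<integral>\<omega>. fB \<omega> * X2 \<omega> \<partial>M) + C * (\<integral>\<omega>. fB \<omega> \<partial>M)"
    using int_fB_X[OF X2L] fB(3) by simp
  finally have lhs: "(\<integral>\<omega>. fB \<omega> * u \<omega> \<partial>M) = (\<integral>\<omega>. fB \<omega> * X2 \<omega> \<partial>M) + C"
    using int_fB by simp
  have "AE \<omega> in M. y (\<lambda>\<eta>. X2 \<eta> + C) \<omega> = y X2 \<omega> + y (\<lambda>_. C) \<omega>"
    by (rule y_add[OF X2L Linf_const])
  then have "AE \<omega> in M. y u \<omega> = y X2 \<omega> + y (\<lambda>_. C) \<omega>"
    unfolding u_def[abs_def] .
  then have "(\<integral>\<omega>. y u \<omega> \<partial>M) = (\<integral>\<omega>. y X2 \<omega> + y (\<lambda>_. C) \<omega> \<partial>M)"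
    by (rule integral_cong_AE[rotated 2])
      (use y_int[OF X2L] y_int[OF Linf_const] y_int[OF uL] in
        \<open>auto intro: borel_measurable_integrable\<close>)
  also have "\<dots> = (\<integral>\<omega>. y X2 \<omega> \<partial>M) + C"
    using y_int[OF X2L] y_int[OF Linf_const, of C] int_y_const[of C] by simp
  finally have rhs: "(\<integral>\<omega>. y u \<omega> \<partial>M) = (\<integral>\<omega>. y X2 \<omega> \<partial>M) + C" .
  have e2: "(\<integral>\<omega>. fB \<omega> * X2 \<omega> \<partial>M) = (\<integral>\<omega>. y X2 \<omega> \<partial>M)" using uy lhs rhs by simp
  have "(\<integral>\<omega>. fB \<omega> * X \<omega> \<partial>M) = (\<integral>\<omega>. fB \<omega> * X2 \<omega> \<partial>M)"
    by (rule integral_cong_AE)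
      (use X2eq int_fB_X[OF X] int_fB_X[OF X2L] in \<open>auto intro: borel_measurable_integrable\<close>)
  also have "\<dots> = (\<integral>\<omega>. y X2 \<omega> \<partial>M)" by (rule e2)
  also have "\<dots> = (\<integral>\<omega>. y X \<omega> \<partial>M)"
    by (rule integral_cong_AE)
      (use y_cong[OF X X2L X2eq] y_int[OF X] y_int[OF X2L] in \<open>auto intro: borel_measurable_integrable\<close>)
  finally show ?thesis .
qed


lemma y_ind_mult: assumes S: "S \<in> sets A" and X: "X \<in> Linf M B"
  shows "(\<integral>\<omega>. y (\<lambda>\<eta>. indicator S \<eta> * X \<eta>) \<omega> \<partial>M) = (\<integral>\<omega>. indicator S \<omega> * y X \<omega> \<partial>M)"
proof -
  have SL: "(\<lambda>\<eta>. indicator S \<eta> * X \<eta>) \<in> Linf M B"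
    by (rule Linf_mult[OF Linf_ind[OF setsA[OF S]] X])
  have m: "(\<lambda>\<omega>. indicator S \<omega> * y X \<omega>) \<in> borel_measurable M"
    by (rule borel_measurable_times[OF borel_measurable_indicator[OF setsB[OF setsA[OF S]]]
          measB_M[OF measA_B[OF y_measA[OF X]]]])
  have nn: "AE \<omega> in M. 0 \<le> (indicator S \<omega> :: real)" by (rule AE_I2) simp
  have h: "AE \<omega> in M. y (\<lambda>\<eta>. indicator S \<eta> * X \<eta>) \<omega> = indicator S \<omega> * y X \<omega>"
    by (rule y_homog[OF Linf_indA[OF S] nn X])
  show ?thesis
    by (rule integral_cong_AE[OF borel_measurable_integrable[OF y_int[OF SL]] m h])
qed

lemma cond: assumes X: "X \<in> Linf M B"
  shows "AE \<omega> in M. real_cond_exp M A (\<lambda>\<eta>. fB \<eta> * X \<eta>) \<omega> = y X \<omega>"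
proof -
  interpret SA: sigma_finite_subalgebra M A by (rule sfA)
  show ?thesis
  proof (rule SA.real_cond_exp_charact)
    fix S assume S: "S \<in> sets A"
    have "(\<integral>\<omega>\<in>S. fB \<omega> * X \<omega> \<partial>M) = (\<integral>\<omega>. indicator S \<omega> * (fB \<omega> * X \<omega>) \<partial>M)"
      unfolding set_lebesgue_integral_def by (rule Bochner_Integration.integral_cong) simp_all
    also have "\<dots> = (\<integral>\<omega>. fB \<omega> * (indicator S \<omega> * X \<omega>) \<partial>M)"
      by (rule Bochner_Integration.integral_cong) (simp_all only: mult.left_commute)
    also have "\<dots> = (\<integral>\<omega>. y (\<lambda>\<eta>. indicator S \<eta> * X \<eta>) \<omega> \<partial>M)"
      by (rule core[OF Linf_mult[OF Linf_ind[OF setsA[OF S]] X]])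
    also have "\<dots> = (\<integral>\<omega>. indicator S \<omega> * y X \<omega> \<partial>M)" by (rule y_ind_mult[OF S X])
    also have "\<dots> = (\<integral>\<omega>\<in>S. y X \<omega> \<partial>M)"
      unfolding set_lebesgue_integral_def by (rule Bochner_Integration.integral_cong) simp_all
    finally show "(\<integral>\<omega>\<in>S. fB \<omega> * X \<omega> \<partial>M) = (\<integral>\<omega>\<in>S. y X \<omega> \<partial>M)" .
  next
    show "integrable M (\<lambda>\<eta>. fB \<eta> * X \<eta>)" by (rule int_fB_X[OF X])
    show "integrable M (y X)" by (rule y_int[OF X])
    show "y X \<in> borel_measurable A" by (rule y_measA[OF X])
  qed
qed

lemma cond1: "AE \<omega> in M. real_cond_exp M A fB \<omega> = 1"
proof -
  have e: "(\<lambda>\<eta>. fB \<eta> * 1) = fB" by (rule ext) simp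
  have "AE \<omega> in M. real_cond_exp M A (\<lambda>\<eta>. fB \<eta> * 1) \<omega> = y (\<lambda>_. 1) \<omega>"
    by (rule cond[OF Linf_const])
  then have "AE \<omega> in M. real_cond_exp M A fB \<omega> = y (\<lambda>_. 1) \<omega>" unfolding e .
  then show ?thesis using y1 by eventually_elim simp
qed

lemma x_cond: assumes X: "X \<in> Linf M B"
  shows "AE \<omega> in M. x X \<omega> = x1 \<omega> * real_cond_exp M A (\<lambda>\<eta>. fB \<eta> * X \<eta>) \<omega>"
  using cond[OF X] x_y[of X] by eventually_elim simp

lemma probN: "prob_space N"
proof (rule prob_spaceI)
  have top: "space M \<in> sets B" using sets.top[of B] spaceB by simp
  have "AE \<omega> in M. (indicator (space M) \<omega> :: real) = 1" by (rule AE_I2) simp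
  then have h: "AE \<omega> in M. y (indicator (space M)) \<omega> = y (\<lambda>_. 1) \<omega>"
    by (rule y_cong[OF Linf_const Linf_ind[OF top]])
  have "(\<integral>\<omega>. y (indicator (space M)) \<omega> \<partial>M) = (\<integral>\<omega>. y (\<lambda>_. 1) \<omega> \<partial>M)"
    by (rule integral_cong_AE[OF borel_measurable_integrable[OF y_int[OF Linf_ind[OF top]]]
          borel_measurable_integrable[OF y_int[OF Linf_const]] h])
  then have "nu (space M) = 1" using int_y_const[of 1] by (simp add: nu_def)
  then show "emeasure N (space N) = 1" using emeasure_N[OF top] space_N spaceB by simp
qed

lemma N_A: assumes D: "D \<in> sets A" shows "emeasure N D = emeasure M D"
proof -
  have DB: "D \<in> sets B" using setsA[OF D] .
  have nn: "AE \<omega> in M. 0 \<le> (indicator D \<omega> :: real)" by (rule AE_I2) simp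
  have "AE \<omega> in M. y (\<lambda>\<eta>. indicator D \<eta> * 1) \<omega> = indicator D \<omega> * y (\<lambda>_. 1) \<omega>"
    by (rule y_homog[OF Linf_indA[OF D] nn Linf_const])
  moreover have e: "(\<lambda>\<eta>. indicator D \<eta> * (1::real)) = indicator D" by (rule ext) simp
  ultimately have "AE \<omega> in M. y (indicator D) \<omega> = indicator D \<omega> * y (\<lambda>_. 1) \<omega>" by simp
  then have h: "AE \<omega> in M. y (indicator D) \<omega> = indicator D \<omega>" using y1 by eventually_elim simp
  have "(\<integral>\<omega>. y (indicator D) \<omega> \<partial>M) = (\<integral>\<omega>. indicator D \<omega> \<partial>M)"
    by (rule integral_cong_AE[OF borel_measurable_integrable[OF y_int[OF Linf_ind[OF DB]]]
          borel_measurable_indicator[OF setsB[OF DB]] h])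
  then have "nu D = ennreal (measure M D)" using setsB[OF DB] by (simp add: nu_def)
  then show ?thesis using emeasure_N[OF DB] P.emeasure_eq_measure by simp
qed

lemma Q_int: assumes Z: "Z \<in> Linf M B"
  shows "integrable N Z" "(\<integral>\<omega>. Z \<omega> \<partial>N) = (\<integral>\<omega>. fB \<omega> * Z \<omega> \<partial>M)"
proof -
  have ZMB: "Z \<in> borel_measurable MB" using measurable_in_subalg[OF subB LinfD[OF Z]] .
  have fMB: "fB \<in> borel_measurable MB" using measurable_in_subalg[OF subB fB(1)] .
  have fZB: "(\<lambda>\<omega>. fB \<omega> * Z \<omega>) \<in> borel_measurable B"
    by (rule borel_measurable_times[OF fB(1) LinfD[OF Z]])
  have i: "integrable MB (\<lambda>\<omega>. fB \<omega> * Z \<omega>)"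
    by (rule integrable_in_subalg[OF subB fZB int_fB_X[OF Z]])
  have nn: "AE \<omega> in MB. 0 \<le> fB \<omega>" by (rule AE_I2) (rule fB(2))
  show "integrable N Z" unfolding fB(4)[symmetric]
    using integrable_density[OF ZMB fMB nn] i by simp
  have "(\<integral>\<omega>. Z \<omega> \<partial>N) = (\<integral>\<omega>. fB \<omega> * Z \<omega> \<partial>MB)" unfolding fB(4)[symmetric]
    using integral_density[OF ZMB fMB nn] by simp
  also have "\<dots> = (\<integral>\<omega>. fB \<omega> * Z \<omega> \<partial>M)" by (rule integral_subalgebra2[OF subB fZB])
  finally show "(\<integral>\<omega>. Z \<omega> \<partial>N) = (\<integral>\<omega>. fB \<omega> * Z \<omega> \<partial>M)" .
qed

lemma sets_N': "sets N = sets MB" using sets_N sets_MB by simp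

lemma condQ: assumes X: "X \<in> Linf M B"
  shows "AE \<omega> in M. real_cond_exp N A X \<omega> = y X \<omega>"
proof -
  interpret PN: prob_space N by (rule probN)
  have subNA: "subalgebra N A" using subA space_N sets_N unfolding subalgebra_def by simp
  have fmsA: "finite_measure_subalgebra N A"
    by (rule finite_measure_subalgebra.intro[OF PN.finite_measure_axioms
          finite_measure_subalgebra_axioms.intro[OF subNA]])
  interpret SA: sigma_finite_subalgebra N A
    by (rule finite_measure_subalgebra_is_sigma_finite[OF fmsA])
  interpret SAM: sigma_finite_subalgebra M A by (rule sfA)
  have yL: "y X \<in> Linf M B" using LinfA_B[OF y_Linf[OF X]] .
  have rf: "integrable M (real_cond_exp M A fB)" by (rule SAM.real_cond_exp_int(1)[OF fB(3)])
  have "AE \<omega> in N. real_cond_exp N A X \<omega> = y X \<omega>"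
  proof (rule SA.real_cond_exp_charact)
    fix S assume S: "S \<in> sets A"
    have SX: "(\<lambda>\<eta>. indicator S \<eta> * X \<eta>) \<in> Linf M B"
      by (rule Linf_mult[OF Linf_ind[OF setsA[OF S]] X])
    have SY: "(\<lambda>\<eta>. indicator S \<eta> * y X \<eta>) \<in> Linf M B"
      by (rule Linf_mult[OF Linf_ind[OF setsA[OF S]] yL])
    have SYA: "(\<lambda>\<omega>. indicator S \<omega> * y X \<omega>) \<in> borel_measurable A"
      by (rule borel_measurable_times[OF borel_measurable_indicator[OF S] y_measA[OF X]])
    have "(\<integral>\<omega>\<in>S. X \<omega> \<partial>N) = (\<integral>\<omega>. indicator S \<omega> * X \<omega> \<partial>N)"
      unfolding set_lebesgue_integral_def by (rule Bochner_Integration.integral_cong) simp_all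
    also have "\<dots> = (\<integral>\<omega>. fB \<omega> * (indicator S \<omega> * X \<omega>) \<partial>M)" by (rule Q_int(2)[OF SX])
    also have "\<dots> = (\<integral>\<omega>. y (\<lambda>\<eta>. indicator S \<eta> * X \<eta>) \<omega> \<partial>M)" by (rule core[OF SX])
    also have "\<dots> = (\<integral>\<omega>. indicator S \<omega> * y X \<omega> \<partial>M)" by (rule y_ind_mult[OF S X])
    also have "\<dots> = (\<integral>\<omega>. (indicator S \<omega> * y X \<omega>) * real_cond_exp M A fB \<omega> \<partial>M)"
    proof (rule integral_cong_AE)
      show "(\<lambda>\<omega>. indicator S \<omega> * y X \<omega>) \<in> borel_measurable M"
        by (rule borel_measurable_integrable[OF Linf_int[OF SY]])
      show "(\<lambda>\<omega>. (indicator S \<omega> * y X \<omega>) * real_cond_exp M A fB \<omega>) \<in> borel_measurable M"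
        by (rule borel_measurable_times[OF borel_measurable_integrable[OF Linf_int[OF SY]]
              borel_measurable_cond_exp2])
      show "AE \<omega> in M. indicator S \<omega> * y X \<omega> = indicator S \<omega> * y X \<omega> * real_cond_exp M A fB \<omega>"
        using cond1 by eventually_elim simp
    qed
    also have "\<dots> = (\<integral>\<omega>. (indicator S \<omega> * y X \<omega>) * fB \<omega> \<partial>M)"
    proof (rule SAM.real_cond_exp_intg(2))
      have "integrable M (\<lambda>\<omega>. fB \<omega> * (indicator S \<omega> * y X \<omega>))" by (rule int_fB_X[OF SY])
      moreover have "(\<lambda>\<omega>. fB \<omega> * (indicator S \<omega> * y X \<omega>)) = (\<lambda>\<omega>. indicator S \<omega> * y X \<omega> * fB \<omega>)"
        by (rule ext) (simp only: mult.commute)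
      ultimately show "integrable M (\<lambda>\<omega>. indicator S \<omega> * y X \<omega> * fB \<omega>)" by simp
      show "(\<lambda>\<omega>. indicator S \<omega> * y X \<omega>) \<in> borel_measurable A" by (rule SYA)
      show "fB \<in> borel_measurable M" using fB(1) measB_M by blast
    qed
    also have "\<dots> = (\<integral>\<omega>. fB \<omega> * (indicator S \<omega> * y X \<omega>) \<partial>M)"
      by (rule Bochner_Integration.integral_cong) (simp_all only: mult.commute)
    also have "\<dots> = (\<integral>\<omega>. indicator S \<omega> * y X \<omega> \<partial>N)" by (rule Q_int(2)[OF SY, symmetric])
    also have "\<dots> = (\<integral>\<omega>\<in>S. y X \<omega> \<partial>N)"
      unfolding set_lebesgue_integral_def by (rule Bochner_Integration.integral_cong) simp_all
    finally show "(\<integral>\<omega>\<in>S. X \<omega> \<partial>N) = (\<integral>\<omega>\<in>S. y X \<omega> \<partial>N)" .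
  next
    show "integrable N X" by (rule Q_int(1)[OF X])
    show "integrable N (y X)" by (rule Q_int(1)[OF yL])
    show "y X \<in> borel_measurable A" by (rule y_measA[OF X])
  qed
  then have aeN: "AE \<omega> in N. real_cond_exp N A X \<omega> = y X \<omega>" .
  define D where "D = {\<omega> \<in> space M. real_cond_exp N A X \<omega> \<noteq> y X \<omega>}"
  have DA: "D \<in> sets A"
  proof -
    have "D = {\<omega> \<in> space A. real_cond_exp N A X \<omega> \<noteq> y X \<omega>}" using spaceA D_def by simp
    also have "\<dots> \<in> sets A" using y_measA[OF X] by measurable
    finally show ?thesis .
  qed
  have DB: "D \<in> sets B" by (rule setsA[OF DA])
  have DN: "D \<in> sets N" using DB sets_N by simp
  have Dset: "{\<omega> \<in> space N. \<not> (real_cond_exp N A X \<omega> = y X \<omega>)} = D"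
    unfolding D_def space_N spaceB by simp
  have "emeasure N D = 0" using AE_iff_measurable[OF DN Dset] aeN by simp
  then have "emeasure M D = 0" using N_A[OF DA] by simp
  then have "D \<in> null_sets M" using setsB[OF DB] by (rule null_setsI)
  moreover have "{\<omega> \<in> space M. \<not> (real_cond_exp N A X \<omega> = y X \<omega>)} \<subseteq> D"
    unfolding D_def by simp
  ultimately show ?thesis by (rule AE_I')
qed

end

theorem theorem3p3:
  fixes M A B :: "'a measure"
    and x :: "('a \<Rightarrow> real) \<Rightarrow> ('a \<Rightarrow> real)"
    and c :: real
  assumes prob: "prob_space M"
    and complete: "complete_ms M"
    and subB: "subalgebra M B"
    and subA: "subalgebra B A"
    and maps: "\<And>X. X \<in> Linf M B \<Longrightarrow> x X \<in> Linf M A"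
    and additive: "\<And>X Y. X \<in> Linf M B \<Longrightarrow> Y \<in> Linf M B \<Longrightarrow>
        AE \<omega> in M. x (\<lambda>\<eta>. X \<eta> + Y \<eta>) \<omega> = x X \<omega> + x Y \<omega>"
    and scalar: "\<And>X (a::real). X \<in> Linf M B \<Longrightarrow>
        AE \<omega> in M. x (\<lambda>\<eta>. a * X \<eta>) \<omega> = a * x X \<omega>"
    and A_homog: "\<And>l X. l \<in> Linf M A \<Longrightarrow> (AE \<omega> in M. 0 \<le> l \<omega>) \<Longrightarrow> X \<in> Linf M B \<Longrightarrow>
        AE \<omega> in M. x (\<lambda>\<eta>. l \<eta> * X \<eta>) \<omega> = l \<omega> * x X \<omega>"
    and monotone: "\<And>X X'. X \<in> Linf M B \<Longrightarrow> X' \<in> Linf M B \<Longrightarrow>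
        (AE \<omega> in M. X' \<omega> \<le> X \<omega>) \<Longrightarrow> AE \<omega> in M. x X' \<omega> \<le> x X \<omega>"
    and cont_above: "\<And>Xs X. (\<And>n. Xs n \<in> Linf M B) \<Longrightarrow> X \<in> Linf M B \<Longrightarrow>
        (AE \<omega> in M. \<forall>n. Xs (Suc n) \<omega> \<le> Xs n \<omega>) \<Longrightarrow>
        (AE \<omega> in M. (\<lambda>n. Xs n \<omega>) \<longlonglongrightarrow> X \<omega>) \<Longrightarrow>
        AE \<omega> in M. (\<forall>n. x (Xs (Suc n)) \<omega> \<le> x (Xs n) \<omega>) \<and> (\<lambda>n. x (Xs n) \<omega>) \<longlonglongrightarrow> x X \<omega>"
    and c_pos: "c > 0"
    and x1_ge: "AE \<omega> in M. c \<le> x (\<lambda>_. 1) \<omega>"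
  shows "(\<exists>Q f. prob_space Q \<and> sets Q = sets B \<and> space Q = space M
            \<and> f \<in> borel_measurable B \<and> (\<forall>\<omega>. 0 \<le> f \<omega>) \<and> integrable M f
            \<and> Q = density (restr_to_subalg M B) (\<lambda>\<omega>. ennreal (f \<omega>))
            \<and> absolutely_continuous (restr_to_subalg M B) Q
            \<and> (\<forall>X \<in> Linf M B. AE \<omega> in M.
                 x X \<omega> = x (\<lambda>_. 1) \<omega> * real_cond_exp Q A X \<omega>
               \<and> x X \<omega> = x (\<lambda>_. 1) \<omega> *
                   real_cond_exp M A (\<lambda>\<eta>. X \<eta> * (f \<eta> / real_cond_exp M A f \<eta>)) \<omega>))
       \<and> (\<exists>f. f \<in> borel_measurable B \<and> (\<forall>\<omega>. 0 \<le> f \<omega>) \<and> integrable M f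
            \<and> prob_space (density (restr_to_subalg M B) (\<lambda>\<omega>. ennreal (f \<omega>)))
            \<and> (AE \<omega> in M. real_cond_exp M A f \<omega> = 1)
            \<and> (\<forall>X \<in> Linf M B. AE \<omega> in M.
                 x X \<omega> = x (\<lambda>_. 1) \<omega> * real_cond_exp M A (\<lambda>\<eta>. f \<eta> * X \<eta>) \<omega>)
            \<and> (\<forall>g. g \<in> borel_measurable B \<and> (AE \<omega> in M. 0 \<le> g \<omega>) \<and> integrable M g
                 \<and> (AE \<omega> in M. real_cond_exp M A g \<omega> = 1)
                 \<and> (\<forall>X \<in> Linf M B. AE \<omega> in M.
                      x X \<omega> = x (\<lambda>_. 1) \<omega> * real_cond_exp M A (\<lambda>\<eta>. g \<eta> * X \<eta>) \<omega>)
                 \<longrightarrow> (AE \<omega> in M. g \<omega> = f \<omega>)))"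
proof -
  interpret C: ctx M A B x c
    by (rule ctx.intro[OF prob subB subA maps additive scalar A_homog monotone cont_above c_pos x1_ge])
  interpret SA: sigma_finite_subalgebra M A by (rule C.sfA)
  let ?MB = "restr_to_subalg M B"
  let ?f = "C.fB"
  let ?Q = "density ?MB (\<lambda>\<omega>. ennreal (?f \<omega>))"
  have QN: "?Q = C.N" by (rule C.fB(4))
  have x1: "C.x1 = x (\<lambda>_. 1)" by (rule C.x1_def)
  have fM: "?f \<in> borel_measurable M" using C.fB(1) C.measB_M by blast
  have part1: "\<forall>X \<in> Linf M B. AE \<omega> in M.
                 x X \<omega> = x (\<lambda>_. 1) \<omega> * real_cond_exp ?Q A X \<omega>
               \<and> x X \<omega> = x (\<lambda>_. 1) \<omega> *
                   real_cond_exp M A (\<lambda>\<eta>. X \<eta> * (?f \<eta> / real_cond_exp M A ?f \<eta>)) \<omega>"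
  proof
    fix X assume X: "X \<in> Linf M B"
    have XM: "X \<in> borel_measurable M" using C.LinfD[OF X] C.measB_M by blast
    have a: "AE \<omega> in M. real_cond_exp ?Q A X \<omega> = C.y X \<omega>" unfolding QN by (rule C.condQ[OF X])
    have b: "AE \<omega> in M. x X \<omega> = C.x1 \<omega> * C.y X \<omega>" by (rule C.x_y)
    have "AE \<omega> in M. X \<omega> * (?f \<omega> / real_cond_exp M A ?f \<omega>) = ?f \<omega> * X \<omega>"
      using C.cond1 by eventually_elim simp
    then have c: "AE \<omega> in M. real_cond_exp M A (\<lambda>\<eta>. X \<eta> * (?f \<eta> / real_cond_exp M A ?f \<eta>)) \<omega>
        = real_cond_exp M A (\<lambda>\<eta>. ?f \<eta> * X \<eta>) \<omega>"
      by (rule SA.real_cond_exp_cong) (use XM fM in \<open>auto intro!: borel_measurable_times borel_measurable_divide\<close>)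
    have d: "AE \<omega> in M. real_cond_exp M A (\<lambda>\<eta>. ?f \<eta> * X \<eta>) \<omega> = C.y X \<omega>" by (rule C.cond[OF X])
    show "AE \<omega> in M. x X \<omega> = x (\<lambda>_. 1) \<omega> * real_cond_exp ?Q A X \<omega>
               \<and> x X \<omega> = x (\<lambda>_. 1) \<omega> *
                   real_cond_exp M A (\<lambda>\<eta>. X \<eta> * (?f \<eta> / real_cond_exp M A ?f \<eta>)) \<omega>"
      using a b c d unfolding x1 by eventually_elim simp
  qed
  have ex1: "\<exists>Q f. prob_space Q \<and> sets Q = sets B \<and> space Q = space M
            \<and> f \<in> borel_measurable B \<and> (\<forall>\<omega>. 0 \<le> f \<omega>) \<and> integrable M f
            \<and> Q = density (restr_to_subalg M B) (\<lambda>\<omega>. ennreal (f \<omega>))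
            \<and> absolutely_continuous (restr_to_subalg M B) Q
            \<and> (\<forall>X \<in> Linf M B. AE \<omega> in M.
                 x X \<omega> = x (\<lambda>_. 1) \<omega> * real_cond_exp Q A X \<omega>
               \<and> x X \<omega> = x (\<lambda>_. 1) \<omega> *
                   real_cond_exp M A (\<lambda>\<eta>. X \<eta> * (f \<eta> / real_cond_exp M A f \<eta>)) \<omega>)"
  proof (intro exI conjI)
    show "prob_space ?Q" using C.probN QN by simp
    show "sets ?Q = sets B" using C.sets_MB by simp
    show "space ?Q = space M" using C.space_MB by simp
    show "absolutely_continuous ?MB ?Q" using C.ac QN by simp
    show "?f \<in> borel_measurable B" by (rule C.fB(1))
    show "\<forall>\<omega>. 0 \<le> ?f \<omega>" using C.fB(2) by blast
    show "integrable M ?f" by (rule C.fB(3))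
    show "?Q = ?Q" by (rule refl)
    show "\<forall>X \<in> Linf M B. AE \<omega> in M.
                 x X \<omega> = x (\<lambda>_. 1) \<omega> * real_cond_exp ?Q A X \<omega>
               \<and> x X \<omega> = x (\<lambda>_. 1) \<omega> *
                   real_cond_exp M A (\<lambda>\<eta>. X \<eta> * (?f \<eta> / real_cond_exp M A ?f \<eta>)) \<omega>"
      by (rule part1)
  qed
  have ex2: "\<exists>f. f \<in> borel_measurable B \<and> (\<forall>\<omega>. 0 \<le> f \<omega>) \<and> integrable M f
            \<and> prob_space (density (restr_to_subalg M B) (\<lambda>\<omega>. ennreal (f \<omega>)))
            \<and> (AE \<omega> in M. real_cond_exp M A f \<omega> = 1)
            \<and> (\<forall>X \<in> Linf M B. AE \<omega> in M.
                 x X \<omega> = x (\<lambda>_. 1) \<omega> * real_cond_exp M A (\<lambda>\<eta>. f \<eta> * X \<eta>) \<omega>)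
            \<and> (\<forall>g. g \<in> borel_measurable B \<and> (AE \<omega> in M. 0 \<le> g \<omega>) \<and> integrable M g
                 \<and> (AE \<omega> in M. real_cond_exp M A g \<omega> = 1)
                 \<and> (\<forall>X \<in> Linf M B. AE \<omega> in M.
                      x X \<omega> = x (\<lambda>_. 1) \<omega> * real_cond_exp M A (\<lambda>\<eta>. g \<eta> * X \<eta>) \<omega>)
                 \<longrightarrow> (AE \<omega> in M. g \<omega> = f \<omega>))"
  proof (intro exI conjI allI impI ballI)
    show "prob_space ?Q" using C.probN QN by simp
    show "AE \<omega> in M. real_cond_exp M A ?f \<omega> = 1" by (rule C.cond1)
    show "AE \<omega> in M. x X \<omega> = x (\<lambda>_. 1) \<omega> * real_cond_exp M A (\<lambda>\<eta>. ?f \<eta> * X \<eta>) \<omega>"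
      if "X \<in> Linf M B" for X using C.x_cond[OF that] unfolding x1 .
  next
    fix g
    assume g: "g \<in> borel_measurable B \<and> (AE \<omega> in M. 0 \<le> g \<omega>) \<and> integrable M g
                 \<and> (AE \<omega> in M. real_cond_exp M A g \<omega> = 1)
                 \<and> (\<forall>X \<in> Linf M B. AE \<omega> in M.
                      x X \<omega> = x (\<lambda>_. 1) \<omega> * real_cond_exp M A (\<lambda>\<eta>. g \<eta> * X \<eta>) \<omega>)"
    have gB[measurable]: "g \<in> borel_measurable B" and gi: "integrable M g" using g by auto
    have fB[measurable]: "?f \<in> borel_measurable B" by (rule C.fB(1))
    define X where "X \<omega> = sgn (g \<omega> - ?f \<omega>)" for \<omega>
    have XB: "X \<in> borel_measurable B" unfolding X_def by measurable
    have XL: "X \<in> Linf M B" by (rule C.Linf_bdd[OF XB, where C=1]) (auto simp: X_def sgn_if)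
    have h1: "AE \<omega> in M. x X \<omega> = C.x1 \<omega> * real_cond_exp M A (\<lambda>\<eta>. g \<eta> * X \<eta>) \<omega>"
      using g XL unfolding x1 by blast
    have h2: "AE \<omega> in M. x X \<omega> = C.x1 \<omega> * real_cond_exp M A (\<lambda>\<eta>. ?f \<eta> * X \<eta>) \<omega>"
      by (rule C.x_cond[OF XL])
    have "AE \<omega> in M. real_cond_exp M A (\<lambda>\<eta>. g \<eta> * X \<eta>) \<omega> = real_cond_exp M A (\<lambda>\<eta>. ?f \<eta> * X \<eta>) \<omega>"
      using h1 h2 C.x1_pos
    proof eventually_elim
      case (elim \<omega>)
      have "C.x1 \<omega> \<noteq> 0" using elim(3) c_pos by linarith
      then show ?case using elim(1,2) by simp
    qed
    then have "(\<integral>\<omega>. real_cond_exp M A (\<lambda>\<eta>. g \<eta> * X \<eta>) \<omega> \<partial>M)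
        = (\<integral>\<omega>. real_cond_exp M A (\<lambda>\<eta>. ?f \<eta> * X \<eta>) \<omega> \<partial>M)"
      by (rule integral_cong_AE[OF borel_measurable_cond_exp2 borel_measurable_cond_exp2])
    then have eq: "(\<integral>\<omega>. g \<omega> * X \<omega> \<partial>M) = (\<integral>\<omega>. ?f \<omega> * X \<omega> \<partial>M)"
      using SA.real_cond_exp_int(2)[OF C.Linf_int_mult[OF XL gi]]
        SA.real_cond_exp_int(2)[OF C.int_fB_X[OF XL]] by simp
    have "(\<integral>\<omega>. \<bar>g \<omega> - ?f \<omega>\<bar> \<partial>M) = (\<integral>\<omega>. g \<omega> * X \<omega> - ?f \<omega> * X \<omega> \<partial>M)"
      by (rule Bochner_Integration.integral_cong) (auto simp: X_def sgn_if algebra_simps)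
    also have "\<dots> = 0"
      using eq C.Linf_int_mult[OF XL gi] C.int_fB_X[OF XL] by simp
    finally have "(\<integral>\<omega>. \<bar>g \<omega> - ?f \<omega>\<bar> \<partial>M) = 0" .
    moreover have "integrable M (\<lambda>\<omega>. \<bar>g \<omega> - ?f \<omega>\<bar>)" using gi C.fB(3) by auto
    ultimately have "AE \<omega> in M. \<bar>g \<omega> - ?f \<omega>\<bar> = 0"
      using integral_nonneg_eq_0_iff_AE[of M "\<lambda>\<omega>. \<bar>g \<omega> - ?f \<omega>\<bar>"] by auto
    then show "AE \<omega> in M. g \<omega> = ?f \<omega>" by eventually_elim simp
  next
    show "?f \<in> borel_measurable B" by (rule C.fB(1))
    show "0 \<le> ?f \<omega>" for \<omega> by (rule C.fB(2))
    show "integrable M ?f" by (rule C.fB(3))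
  qed
  show ?thesis by (rule conjI[OF ex1 ex2])
qed

end
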